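(* Let $\mathcal{F}\subseteq\mathcal{O}$ be a normal family of objects and let $(M_p)_{p\in\mathcal{F}}$ be the Voronoi partition of $V(G)$ with respect to $\mathcal{F}$. Then for every $p\in\mathcal{F}$ we have $\mathrm{loc}(p)\subseteq M_p$.
   Context: $G$ is a connected graph with positive edge weights; $\mathrm{dist}(X,Y)$ denotes the minimum weight of a path between a vertex of $X$ and a vertex of $Y$. Each object $p\in\mathcal{O}$ has a location $\mathrm{loc}(p)$, a nonempty vertex set inducing a connected subgraph, and a radius $\mathrm{rad}(p)\ge 0$. A family $\mathcal{F}$ is normal if locations of its members are pairwise disjoint and $\mathrm{dist}(\mathrm{loc}(p_1),\mathrm{loc}(p_2))>\mathrm{rad}(p_1)-\mathrm{rad}(p_2)$ for all ordered pairs of distinct $p_1,p_2\in\mathcal{F}$. Standing assumption: all values $\mathrm{dist}(u,v)$ and $\mathrm{dist}(u,v)-\mathrm{rad}(p)$ ($u,v\in V(G)$, $p\in\mathcal{O}$) are pairwise different and shortest paths are unique, so there are no ties. The Voronoi partition assigns $v\in V(G)$ to $M_{p_0}$ iff $\mathrm{dist}(v,\mathrm{loc}(p_0))-\mathrm{rad}(p_0)$ is the smallest among the values $\mathrm{dist}(v,\mathrm{loc}(p))-\mathrm{rad}(p)$, $p\in\mathcal{F}$. *)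

theory Defs
  imports Complex_Main
begin

definition walk :: "('v \<times> 'v) set \<Rightarrow> 'v list \<Rightarrow> bool" where
  "walk E xs \<longleftrightarrow> xs \<noteq> [] \<and> (\<forall>i. Suc i < length xs \<longrightarrow> (xs ! i, xs ! Suc i) \<in> E)"

definition walk_weight :: "('v \<Rightarrow> 'v \<Rightarrow> real) \<Rightarrow> 'v list \<Rightarrow> real" where
  "walk_weight w xs = (\<Sum>i<length xs - 1. w (xs ! i) (xs ! Suc i))"

definition wgraph :: "'v set \<Rightarrow> ('v \<times> 'v) set \<Rightarrow> ('v \<Rightarrow> 'v \<Rightarrow> real) \<Rightarrow> bool" where
  "wgraph V E w \<longleftrightarrow> finite V \<and> V \<noteq> {} \<and> E \<subseteq> V \<times> V \<and> sym E \<and>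
     (\<forall>(u,v)\<in>E. w u v > 0 \<and> w u v = w v u)"

definition induces_connected :: "('v \<times> 'v) set \<Rightarrow> 'v set \<Rightarrow> bool" where
  "induces_connected E S \<longleftrightarrow> (\<forall>u\<in>S. \<forall>v\<in>S. \<exists>xs. walk E xs \<and> set xs \<subseteq> S \<and> hd xs = u \<and> last xs = v)"

text \<open>Minimum weight of a path (equivalently walk, weights being positive) between two vertices.\<close>
definition vdist :: "('v \<times> 'v) set \<Rightarrow> ('v \<Rightarrow> 'v \<Rightarrow> real) \<Rightarrow> 'v \<Rightarrow> 'v \<Rightarrow> real" where
  "vdist E w u v = Inf {walk_weight w xs | xs. walk E xs \<and> hd xs = u \<and> last xs = v}"

definition setdist :: "('v \<times> 'v) set \<Rightarrow> ('v \<Rightarrow> 'v \<Rightarrow> real) \<Rightarrow> 'v set \<Rightarrow> 'v set \<Rightarrow> real" where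
  "setdist E w X Y = Inf {vdist E w u v | u v. u \<in> X \<and> v \<in> Y}"

definition normal_family :: "('v \<times> 'v) set \<Rightarrow> ('v \<Rightarrow> 'v \<Rightarrow> real) \<Rightarrow> ('o \<Rightarrow> 'v set) \<Rightarrow> ('o \<Rightarrow> real) \<Rightarrow> 'o set \<Rightarrow> bool" where
  "normal_family E w loc rad F \<longleftrightarrow>
     (\<forall>p1\<in>F. \<forall>p2\<in>F. p1 \<noteq> p2 \<longrightarrow> loc p1 \<inter> loc p2 = {} \<and>
        setdist E w (loc p1) (loc p2) > rad p1 - rad p2)"

definition voronoi_cell :: "'v set \<Rightarrow> ('v \<times> 'v) set \<Rightarrow> ('v \<Rightarrow> 'v \<Rightarrow> real) \<Rightarrow> ('o \<Rightarrow> 'v set) \<Rightarrow> ('o \<Rightarrow> real) \<Rightarrow> 'o set \<Rightarrow> 'o \<Rightarrow> 'v set" where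
  "voronoi_cell V E w loc rad F p0 =
     {v \<in> V. \<forall>p\<in>F. setdist E w {v} (loc p0) - rad p0 \<le> setdist E w {v} (loc p) - rad p}"

end

theory Submission
  imports Defs
begin

lemma ww_nonneg:
  assumes "wgraph V E w" "walk E xs"
  shows "walk_weight w xs \<ge> 0"
proof -
  have "\<And>i. i < length xs - 1 \<Longrightarrow> w (xs ! i) (xs ! Suc i) \<ge> 0"
  proof -
    fix i assume "i < length xs - 1"
    then have "(xs ! i, xs ! Suc i) \<in> E" using assms(2) unfolding walk_def by auto
    then show "w (xs ! i) (xs ! Suc i) \<ge> 0" using assms(1) unfolding wgraph_def by fastforce
  qed
  then show ?thesis unfolding walk_weight_def by (intro sum_nonneg) auto
qed

lemma ww_rev:
  assumes "wgraph V E w" "walk E xs"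
  shows "walk_weight w (rev xs) = walk_weight w xs"
proof -
  define n where "n = length xs"
  have "walk_weight w (rev xs) = (\<Sum>i<n - 1. w (xs ! (n - 1 - i)) (xs ! (n - 1 - Suc i)))"
    unfolding walk_weight_def n_def by (intro sum.cong) (auto simp: rev_nth)
  also have "\<dots> = (\<Sum>j<n - 1. w (xs ! j) (xs ! Suc j))"
  proof (rule sum.reindex_bij_witness[of _ "\<lambda>i. n - 2 - i" "\<lambda>i. n - 2 - i"])
    fix a assume a: "a \<in> {..<n - 1}"
    define j where "j = n - 2 - a"
    have j: "j < n - 1" using a j_def by auto
    then have e: "(xs ! j, xs ! Suc j) \<in> E" using assms(2) unfolding walk_def n_def by auto
    have s: "w (xs ! Suc j) (xs ! j) = w (xs ! j) (xs ! Suc j)"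
      using e assms(1) unfolding wgraph_def by fastforce
    have "n - 1 - a = Suc j" "n - 1 - Suc a = j" using a j_def by auto
    then show "w (xs ! (n - 2 - a)) (xs ! Suc (n - 2 - a)) = w (xs ! (n - 1 - a)) (xs ! (n - 1 - Suc a))"
      using s j_def by simp
  qed auto
  finally show ?thesis unfolding walk_weight_def n_def by simp
qed

lemma walk_rev: "walk E xs \<Longrightarrow> sym E \<Longrightarrow> walk E (rev xs)"
  unfolding walk_def
proof (intro conjI allI impI)
  fix i assume a: "xs \<noteq> [] \<and> (\<forall>i. Suc i < length xs \<longrightarrow> (xs ! i, xs ! Suc i) \<in> E)" "sym E"
    "Suc i < length (rev xs)"
  define n where "n = length xs"
  have "(xs ! (n - 2 - i), xs ! Suc (n - 2 - i)) \<in> E" using a unfolding n_def by auto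
  moreover have "Suc (n - 2 - i) = n - 1 - i" "n - 2 - i = n - 1 - Suc i" using a(3) n_def by auto
  ultimately have "(xs ! (n - 1 - Suc i), xs ! (n - 1 - i)) \<in> E" by simp
  then show "(rev xs ! i, rev xs ! Suc i) \<in> E" using a n_def by (auto simp: rev_nth dest: symD)
qed (auto)

lemma vdist_sym:
  assumes "wgraph V E w"
  shows "vdist E w u v = vdist E w v u"
proof -
  have sE: "sym E" using assms unfolding wgraph_def by auto
  have "{walk_weight w xs | xs. walk E xs \<and> hd xs = u \<and> last xs = v}
      = {walk_weight w xs | xs. walk E xs \<and> hd xs = v \<and> last xs = u}" (is "?A = ?B")
  proof (intro equalityI subsetI)
    fix x assume "x \<in> ?A"
    then obtain xs where "x = walk_weight w xs" "walk E xs" "hd xs = u" "last xs = v" by auto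
    then show "x \<in> ?B"
      using ww_rev[OF assms] walk_rev[OF _ sE]
      by (intro CollectI exI[of _ "rev xs"]) (auto simp: hd_rev last_rev walk_def)
  next
    fix x assume "x \<in> ?B"
    then obtain xs where "x = walk_weight w xs" "walk E xs" "hd xs = v" "last xs = u" by auto
    then show "x \<in> ?A"
      using ww_rev[OF assms] walk_rev[OF _ sE]
      by (intro CollectI exI[of _ "rev xs"]) (auto simp: hd_rev last_rev walk_def)
  qed
  then show ?thesis unfolding vdist_def by simp
qed

lemma vdist_nonneg:
  assumes "wgraph V E w" "induces_connected E V" "u \<in> V" "v \<in> V"
  shows "vdist E w u v \<ge> 0"
proof -
  obtain xs where "walk E xs" "hd xs = u" "last xs = v"
    using assms(2-4) unfolding induces_connected_def by blast
  then show ?thesis unfolding vdist_def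
    by (intro cInf_greatest) (auto intro: ww_nonneg[OF assms(1)])
qed

lemma vdist_self:
  assumes "wgraph V E w"
  shows "vdist E w v v = 0"
  unfolding vdist_def
proof (rule cInf_eq_minimum)
  show "0 \<in> {walk_weight w xs | xs. walk E xs \<and> hd xs = v \<and> last xs = v}"
    by (intro CollectI exI[of _ "[v]"]) (auto simp: walk_def walk_weight_def)
qed (auto intro: ww_nonneg[OF assms])

theorem lemma4p1:
  fixes V :: "'v set" and E :: "('v \<times> 'v) set" and w :: "'v \<Rightarrow> 'v \<Rightarrow> real"
    and loc :: "'o \<Rightarrow> 'v set" and rad :: "'o \<Rightarrow> real" and Obj F :: "'o set"
  assumes graph: "wgraph V E w"
    and connected: "induces_connected E V"
    and objects: "\<forall>p\<in>Obj. loc p \<noteq> {} \<and> loc p \<subseteq> V \<and> induces_connected E (loc p) \<and> rad p \<ge> 0"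
    and no_ties: "\<forall>v\<in>V. \<forall>p\<in>Obj. \<forall>q\<in>Obj. p \<noteq> q \<longrightarrow>
                    setdist E w {v} (loc p) - rad p \<noteq> setdist E w {v} (loc q) - rad q"
    and sub: "F \<subseteq> Obj"
    and normal: "normal_family E w loc rad F"
    and p: "p \<in> F"
  shows "loc p \<subseteq> voronoi_cell V E w loc rad F p"
proof
  fix v assume v: "v \<in> loc p"
  have locV: "\<And>q. q \<in> F \<Longrightarrow> loc q \<subseteq> V" "\<And>q. q \<in> F \<Longrightarrow> loc q \<noteq> {}" using objects sub by auto
  have vV: "v \<in> V" using v locV p by auto
  have sd0: "setdist E w {v} (loc p) = 0"
    unfolding setdist_def
  proof (rule cInf_eq_minimum)
    show "0 \<in> {vdist E w u u' | u u'. u \<in> {v} \<and> u' \<in> loc p}"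
      using v vdist_self[OF graph] by force
  next
    fix x assume "x \<in> {vdist E w u u' | u u'. u \<in> {v} \<and> u' \<in> loc p}"
    then show "0 \<le> x" using vdist_nonneg[OF graph connected] vV locV(1)[OF p] by auto
  qed
  have "setdist E w {v} (loc p) - rad p \<le> setdist E w {v} (loc q) - rad q" if q: "q \<in> F" for q
  proof (cases "q = p")
    case True then show ?thesis by simp
  next
    case False
    have n: "setdist E w (loc q) (loc p) > rad q - rad p"
      using normal q p False unfolding normal_family_def by auto
    have "setdist E w (loc q) (loc p) \<le> setdist E w {v} (loc q)"
      unfolding setdist_def[of E w "{v}"]
    proof (rule cInf_greatest)
      show "{vdist E w u u' | u u'. u \<in> {v} \<and> u' \<in> loc q} \<noteq> {}" using locV(2)[OF q] by auto
    next
      fix x assume "x \<in> {vdist E w u u' | u u'. u \<in> {v} \<and> u' \<in> loc q}"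
      then obtain u' where u': "u' \<in> loc q" "x = vdist E w v u'" by auto
      have "x = vdist E w u' v" using u' vdist_sym[OF graph] by simp
      moreover have "setdist E w (loc q) (loc p) \<le> vdist E w u' v"
        unfolding setdist_def
      proof (rule cInf_lower)
        show "vdist E w u' v \<in> {vdist E w u u'' | u u''. u \<in> loc q \<and> u'' \<in> loc p}"
          using u' v by auto
        show "bdd_below {vdist E w u u'' | u u''. u \<in> loc q \<and> u'' \<in> loc p}"
          unfolding bdd_below_def
          using vdist_nonneg[OF graph connected] locV(1)[OF q] locV(1)[OF p]
          by (intro exI[of _ 0]) auto
      qed
      ultimately show "setdist E w (loc q) (loc p) \<le> x" by simp
    qed
    then show ?thesis using n sd0 by simp
  qed
  then show "v \<in> voronoi_cell V E w loc rad F p" unfolding voronoi_cell_def using vV by auto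
qed

end
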